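(* Let $p=2^{\ell}\pm1$ be a prime with $\ell\ge1$, and let $n\ge k+2$, $k\ge 2$, $\mathfrak{a}\ge1$ be integers with $L_n^{(k)}=(p+1)p^{\mathfrak{a}}-1$ and $p>n^{10}$. Then $2^{k-1}<10n^2$; in particular $k<10\log n$.
   Context: The $k$-Lucas sequence is defined by $L_{2-k}^{(k)}=\cdots=L_{-1}^{(k)}=0$, $L_0^{(k)}=2$, $L_1^{(k)}=1$, $L_n^{(k)}=L_{n-1}^{(k)}+\cdots+L_{n-k}^{(k)}$. $\log$ denotes the natural logarithm. *)

theory Defs
  imports Complex_Main "HOL-Computational_Algebra.Primes"
begin

text \<open>k-Lucas sequence: L 0 = 2, L 1 = 1, and for n >= 2,
  L n = L (n-1) + ... + L (n-k), where terms with negative index are 0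
  (the initial values L_{2-k} = ... = L_{-1} = 0).\<close>
fun kLucas :: "nat \<Rightarrow> nat \<Rightarrow> nat" where
  "kLucas k n = (if n = 0 then 2 else if n = 1 then 1
     else (\<Sum>j\<in>{1..min k n}. kLucas k (n - j)))"

end

theory Submission
  imports Defs
begin
declare kLucas.simps[simp del]

lemma L_rec:
  assumes "k \<ge> 2" "n \<ge> 3"
  shows "kLucas k n + (if k < n then kLucas k (n-1-k) else 0) = 2 * kLucas k (n-1)"
proof -
  obtain m where m: "n = Suc m" using assms by (cases n) auto
  have m2: "m \<ge> 2" using assms m by simp
  have e1: "kLucas k n = (\<Sum>j\<in>{1..min k n}. kLucas k (n - j))"
    using assms by (subst kLucas.simps) simp
  have e2: "kLucas k m = (\<Sum>j\<in>{1..min k m}. kLucas k (m - j))"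
    using m2 by (subst kLucas.simps) simp
  have s1: "(\<Sum>j\<in>{1..min k n}. kLucas k (n - j)) = kLucas k m + (\<Sum>j\<in>{2..min k n}. kLucas k (n - j))"
    using assms m by (subst sum.atLeast_Suc_atMost) (auto simp: numeral_2_eq_2)
  have s2: "(\<Sum>j\<in>{1..min k m}. kLucas k (m - j)) = (\<Sum>j\<in>{2..Suc (min k m)}. kLucas k (n - j))"
    unfolding numeral_2_eq_2 sum.shift_bounds_cl_Suc_ivl m by simp
  show ?thesis
  proof (cases "k < n")
    case True
    then have "min k n = k" "min k m = k" using m by auto
    moreover have "k \<ge> 2" using assms by simp
    ultimately show ?thesis using e1 e2 s1 s2 True m
      by (auto simp: sum.cl_ivl_Suc Suc_diff_le)
  next
    case False
    then have "min k n = Suc m" "min k m = m" using m by auto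
    then show ?thesis using e1 e2 s1 s2 False m by (auto simp: sum.cl_ivl_Suc)
  qed
qed

lemma L2: "k \<ge> 2 \<Longrightarrow> kLucas k 2 = 3"
  by (subst kLucas.simps) (simp add: numeral_2_eq_2 kLucas.simps min_def)

lemma L_up: assumes "k \<ge> 2" "j \<ge> 2" shows "kLucas k j \<le> 3 * 2 ^ (j - 2)"
  using assms(2)
proof (induction j rule: nat_induct_at_least)
  case base then show ?case using L2 assms by simp
next
  case (Suc j)
  have "kLucas k (Suc j) \<le> 2 * kLucas k j"
    using L_rec[OF assms(1), of "Suc j"] Suc by simp
  also have "\<dots> \<le> 3 * 2 ^ (Suc j - 2)"
  proof -
    obtain i where i: "j = i + 2" using Suc le_Suc_ex by (metis add.commute)
    show ?thesis using Suc.IH unfolding i by simp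
  qed
  finally show ?case .
qed

lemma L_up2: assumes "k \<ge> 2" shows "kLucas k j \<le> 2 ^ (j + 1)"
proof -
  consider "j = 0" | "j = 1" | "j \<ge> 2" by linarith
  then show ?thesis
  proof cases
    case 1 then show ?thesis by (simp add: kLucas.simps)
  next
    case 2 then show ?thesis by (simp add: kLucas.simps)
  next
    case 3
    have "kLucas k j \<le> 3 * 2 ^ (j - 2)" using L_up assms 3 by blast
    also have "\<dots> \<le> 8 * 2 ^ (j - 2)" by simp
    also have "\<dots> = 2 ^ (j + 1)"
    proof -
      obtain i where "j = i + 2" using 3 le_Suc_ex by (metis add.commute)
      then show ?thesis by simp
    qed
    finally show ?thesis .
  qed
qed

lemma L_low: assumes "k \<ge> 2" "n \<ge> 2"
  shows "2 ^ k * (3 * 2 ^ (n - 2)) \<le> 2 ^ k * kLucas k n + (n - 2) * 2 ^ (n + 1)"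
  using assms(2)
proof (induction n rule: nat_induct_at_least)
  case base then show ?case using L2 assms by simp
next
  case (Suc n)
  define E where "E = (if k < Suc n then kLucas k (Suc n - 1 - k) else 0)"
  have rec: "kLucas k (Suc n) + E = 2 * kLucas k n"
    using L_rec[OF assms(1), of "Suc n"] Suc unfolding E_def by simp
  have E: "2 ^ k * E \<le> 2 ^ (Suc n)"
  proof (cases "k < Suc n")
    case True
    then have "E \<le> 2 ^ (n - k + 1)" unfolding E_def using L_up2[OF assms(1)] by simp
    then have "2 ^ k * E \<le> 2 ^ k * 2 ^ (n - k + 1)" by simp
    also have "\<dots> = 2 ^ (Suc n)" using True by (simp flip: power_add)
    finally show ?thesis .
  qed (simp add: E_def)
  have "(2::nat) ^ k * (3 * 2 ^ (Suc n - 2)) = 2 * (2 ^ k * (3 * 2 ^ (n - 2)))"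
  proof -
    obtain i where i: "n = i + 2" using Suc le_Suc_ex by (metis add.commute)
    show ?thesis unfolding i by simp
  qed
  also have "\<dots> \<le> 2 * (2 ^ k * kLucas k n + (n - 2) * 2 ^ (n + 1))" using Suc by simp
  also have "\<dots> = 2 ^ k * kLucas k (Suc n) + 2 ^ k * E + (n - 2) * 2 ^ (n + 2)"
  proof -
    have "(2::nat)^k * (2 * kLucas k n) = 2^k * (kLucas k (Suc n) + E)" using rec by simp
    then show ?thesis by (simp add: algebra_simps)
  qed
  also have "\<dots> \<le> 2 ^ k * kLucas k (Suc n) + 2 ^ Suc n + (n - 2) * 2 ^ (n + 2)"
    using E by simp
  also have "\<dots> \<le> 2 ^ k * kLucas k (Suc n) + (Suc n - 2) * 2 ^ (Suc n + 1)"
  proof -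
    obtain i where i: "n = i + 2" using Suc le_Suc_ex by (metis add.commute)
    have "(2::nat) ^ Suc n + (n - 2) * 2 ^ (n + 2) \<le> (Suc n - 2) * 2 ^ (Suc n + 1)"
      unfolding i by (simp add: algebra_simps)
    then show ?thesis by simp
  qed
  finally show ?case .
qed

lemma pow_le_lin:
  fixes x :: real
  assumes "0 \<le> x" "real m * x \<le> 1/2"
  shows "(1 + x) ^ m \<le> 1 + 2 * real m * x"
  using assms(2)
proof (induction m)
  case 0 then show ?case by simp
next
  case (Suc m)
  have mx: "real m * x \<le> 1/2" using Suc.prems assms(1) by (simp add: algebra_simps)
  have "(1 + x) ^ Suc m = (1 + x) * (1 + x) ^ m" by simp
  also have "\<dots> \<le> (1 + x) * (1 + 2 * real m * x)"
    using Suc.IH[OF mx] assms(1) by (intro mult_left_mono) auto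
  also have "\<dots> = 1 + (2 * real m + 1) * x + 2 * (real m * x) * x" by (simp add: algebra_simps)
  also have "\<dots> \<le> 1 + (2 * real m + 1) * x + x"
    using mult_right_mono[OF mx assms(1)] by simp
  finally show ?case by (simp add: algebra_simps)
qed

lemma part1:
  fixes p l n k a :: nat
  assumes "prime p"
    and "l \<ge> 1"
    and "p = 2 ^ l + 1 \<or> p = 2 ^ l - 1"
    and "k \<ge> 2" and "n \<ge> k + 2" and "a \<ge> 1"
    and "kLucas k n = (p + 1) * p ^ a - 1"
    and "p > n ^ 10"
  shows "2 ^ (k - 1) < 10 * n ^ 2"
proof (rule ccontr)
  assume H: "\<not> 2 ^ (k - 1) < 10 * n ^ 2"
  have n4: "n \<ge> 4" using assms by simp
  have k2: "(2::nat) ^ k = 2 * 2 ^ (k - 1)" using assms(4)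
    by (cases k) auto
  have "20 * n ^ 2 \<le> 2 ^ k" using H k2 by simp
  moreover have "80 * n \<le> 20 * n ^ 2" using n4 by (simp add: power2_eq_square)
  ultimately have K: "80 * n \<le> 2 ^ k" by linarith
  define L where "L = kLucas k n"
  define Q where "Q = (2::nat) ^ (n - 2)"
  have Q2: "(2::nat) ^ (n + 1) = 8 * Q" "(2::nat) ^ n = 4 * Q"
  proof -
    define i where "i = n - 2"
    have i: "n = i + 2" using n4 unfolding i_def by simp
    show "(2::nat) ^ (n + 1) = 8 * Q" "(2::nat) ^ n = 4 * Q" unfolding Q_def i by simp_all
  qed
  have Q4: "Q \<ge> 4"
  proof -
    have "(2::nat) ^ 2 \<le> 2 ^ (n - 2)" using n4 by (intro power_increasing) auto
    then show ?thesis unfolding Q_def by simp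
  qed
  have Lup: "L \<le> 3 * Q" unfolding L_def Q_def using L_up assms(4) n4 by simp
  have "2 ^ k * (3 * Q) \<le> 2 ^ k * L + (n - 2) * 2 ^ (n + 1)"
    using L_low[OF assms(4), of n] n4 unfolding L_def Q_def by simp
  then have Llow: "2 ^ k * (3 * Q) \<le> 2 ^ k * L + (n - 2) * (8 * Q)"
    by (simp only: Q2(1))
  have "(n - 2) * (8 * Q) * 10 \<le> (80 * n) * Q" by simp
  also have "\<dots> \<le> 2 ^ k * Q" using K by (intro mult_right_mono) auto
  finally have "(n - 2) * (8 * Q) * 10 \<le> 2 ^ k * Q" .
  define D where "D = (n - 2) * (8 * Q)"
  have D10: "10 * D \<le> 2 ^ k * Q" unfolding D_def using \<open>(n - 2) * (8 * Q) * 10 \<le> 2 ^ k * Q\<close> by simp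
  have "2 ^ k * (30 * Q) = 10 * (2 ^ k * (3 * Q))" by simp
  also have "\<dots> \<le> 10 * (2 ^ k * L + D)" using Llow unfolding D_def by simp
  also have "\<dots> = 2 ^ k * (10 * L) + 10 * D" by simp
  also have "\<dots> \<le> 2 ^ k * (10 * L) + 2 ^ k * Q" using D10 by simp
  finally have "2 ^ k * (29 * Q) + 2 ^ k * Q \<le> 2 ^ k * (10 * L) + 2 ^ k * Q" by simp
  then have "2 ^ k * (29 * Q) \<le> 2 ^ k * (10 * L)" by simp
  then have "29 * Q \<le> 10 * L" by simp
  then have Llow': "29 * real Q \<le> 10 * real L" by linarith
  define N where "N = (p + 1) * p ^ a"
  have p2: "p \<ge> 2" using assms(1) prime_ge_2_nat by blast
  have "p ^ a \<ge> 1" using p2 by simp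
  then have N1: "N \<ge> 1" unfolding N_def by (metis le_add1 order.trans add.commute mult_Suc Suc_eq_plus1)
  have LN: "L + 1 = N" unfolding L_def N_def using assms(7) N1 N_def by simp
  have aN: "a \<le> n"
  proof -
    have "2 ^ a \<le> p ^ a" using p2 by (simp add: power_mono)
    also have "\<dots> \<le> N" unfolding N_def by simp
    also have "\<dots> \<le> 4 * Q" using LN Lup Q4 by linarith
    finally have "(2::nat) ^ a \<le> 2 ^ n" using Q2 by simp
    then show ?thesis by simp
  qed
  have n10: "n ^ 10 \<ge> 100 * (n + 2)"
  proof -
    have "(4::nat) ^ 9 \<le> n ^ 9" by (rule power_mono[OF n4]) simp
    then have "4 ^ 9 * n \<le> n ^ 9 * n" by simp
    then have "262144 * n \<le> n ^ 10" by (simp add: power_Suc2 [symmetric] del: power_Suc)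
    moreover have "100 * (n + 2) \<le> 262144 * n" using n4 by simp
    ultimately show ?thesis by (rule order.trans[rotated])
  qed
  have pa: "100 * (real a + 2) + 1 \<le> real p"
  proof -
    have "100 * (a + 2) \<le> n ^ 10" by (rule order.trans[OF _ n10]) (use aN in simp)
    then have "100 * (a + 2) < p" using assms(8) by (rule le_less_trans)
    then have "100 * (a + 2) + 1 \<le> p" by simp
    then have "real (100 * (a + 2) + 1) \<le> real p" by (rule of_nat_mono)
    then show ?thesis by simp
  qed
  define P where "P = (2::real) ^ l"
  define x where "x = 1 / P"
  define M where "M = l * (a + 1)"
  have PM: "P ^ (a + 1) = 2 ^ M" unfolding P_def M_def by (simp only: power_mult)
  have Ppos: "P \<ge> 1" unfolding P_def by simp
  have NM: "(99/100) * 2 ^ M \<le> real N \<and> real N \<le> (51/50) * 2 ^ M"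
    using assms(3)
  proof
    assume pp: "p = 2 ^ l + 1"
    then have rp: "real p = P + 1" unfolding P_def by simp
    have xa: "(real a + 2) * x \<le> 1/100" unfolding x_def using pa rp Ppos by (simp add: field_simps)
    have x0: "x \<ge> 0" unfolding x_def using Ppos by simp
    have NP: "real N = P ^ (a + 1) * ((1 + 2 * x) * (1 + x) ^ a)"
      unfolding N_def x_def using Ppos rp by (simp add: field_simps power_divide)
    have "(1 + 2 * x) * (1 + x) ^ a \<le> (1 + x) ^ (a + 2)"
      using x0 by (simp add: power2_eq_square mult_right_mono algebra_simps)
    also have "\<dots> \<le> 1 + 2 * real (a + 2) * x"
    proof (rule pow_le_lin[OF x0])
      have "real (a + 2) * x = (real a + 2) * x" by simp
      then show "real (a + 2) * x \<le> 1/2" using xa by linarith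
    qed
    also have "\<dots> \<le> (51/50)"
    proof -
      have "2 * real (a + 2) * x = 2 * ((real a + 2) * x)" by simp
      then show ?thesis using xa by linarith
    qed
    finally have up: "(1 + 2 * x) * (1 + x) ^ a \<le> (51/50)" .
    have "1 \<le> (1 + x) ^ a" using x0 by (intro one_le_power) auto
    moreover have "1 \<le> 1 + 2 * x" using x0 by simp
    ultimately have lo: "1 \<le> (1 + 2 * x) * (1 + x) ^ a"
      by (metis mult_mono' mult_1 zero_le_one order.trans)
    show ?thesis using up lo NP PM Ppos by (auto simp: mult_left_mono)
  next
    assume pm: "p = 2 ^ l - 1"
    have "(1::nat) \<le> 2 ^ l" by simp
    then have rp: "real p = P - 1" unfolding P_def pm by (simp add: of_nat_diff)
    have xa: "real a * x \<le> 1/100" unfolding x_def using pa rp Ppos by (simp add: field_simps)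
    have x1: "x \<le> 1" unfolding x_def using Ppos by simp
    have NP0: "real N = P * (P - 1) ^ a"
    proof -
      have "real N = (real p + 1) * real p ^ a" unfolding N_def by (simp add: algebra_simps)
      also have "\<dots> = P * (P - 1) ^ a" unfolding rp by simp
      finally show ?thesis .
    qed
    have "P - 1 = P * (1 - x)" unfolding x_def using Ppos by (simp add: field_simps)
    then have "(P - 1) ^ a = P ^ a * (1 - x) ^ a" by (simp add: power_mult_distrib)
    then have NP: "real N = P ^ (a + 1) * (1 - x) ^ a" using NP0 by simp
    have "1 + real a * (- x) \<le> (1 + - x) ^ a" using x1 by (intro Bernoulli_inequality) simp
    then have lo: "(99/100) \<le> (1 - x) ^ a" using xa by simp
    have up: "(1 - x) ^ a \<le> 1" using x1 unfolding x_def using Ppos by (intro power_le_one) auto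
    show ?thesis using up lo NP PM Ppos by (auto simp: mult_left_mono)
  qed
  have RN: "29 * real Q < 10 * real N" "real N \<le> 3 * real Q + 1"
  proof -
    have "real L + 1 = real N" using LN by (metis of_nat_1 of_nat_add)
    moreover have "real L \<le> 3 * real Q" using Lup by (metis of_nat_le_iff of_nat_mult of_nat_numeral)
    ultimately show "29 * real Q < 10 * real N" "real N \<le> 3 * real Q + 1" using Llow' by linarith+
  qed
  show False
  proof (cases "M \<ge> n")
    case True
    have "(2::real) ^ n \<le> 2 ^ M" using True by (intro power_increasing) auto
    then have "4 * real Q \<le> 2 ^ M" using Q2(2) by (metis of_nat_numeral of_nat_mult of_nat_power)
    then show False using NM RN Q4 by linarith
  next
    case False
    then have "(2::real) ^ M \<le> 2 ^ (n - 1)" by (intro power_increasing) auto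
    moreover have "(2::real) ^ (n - 1) = 2 * real Q"
    proof -
      define i where "i = n - 2"
    have i: "n = i + 2" using n4 unfolding i_def by simp
      show ?thesis unfolding Q_def i by simp
    qed
    ultimately show False using NM RN Q4 by linarith
  qed
qed

theorem mainTheorem12:
  fixes p l n k a :: nat
  assumes "prime p"
    and "l \<ge> 1"
    and "p = 2 ^ l + 1 \<or> p = 2 ^ l - 1"
    and "k \<ge> 2" and "n \<ge> k + 2" and "a \<ge> 1"
    and "kLucas k n = (p + 1) * p ^ a - 1"
    and "p > n ^ 10"
  shows "2 ^ (k - 1) < 10 * n ^ 2 \<and> real k < 10 * ln (real n)"
proof
  show A: "2 ^ (k - 1) < 10 * n ^ 2" using part1[OF assms] .
  have n4: "n \<ge> 4" using assms by simp
  have "10 * n ^ 2 \<le> n ^ 2 * n ^ 2"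
  proof -
    have "10 \<le> n * n" using n4 mult_le_mono[OF n4 n4] by simp
    then show ?thesis by (simp add: power2_eq_square)
  qed
  then have "(2::nat) ^ (k - 1) < n ^ 4" using A by (simp add: power_add[symmetric])
  then have "real ((2::nat) ^ (k - 1)) < real (n ^ 4)" by (simp only: of_nat_less_iff)
  then have "(2::real) ^ (k - 1) < real n ^ 4" by simp
  then have "ln ((2::real) ^ (k - 1)) < ln (real n ^ 4)" using n4 by simp
  then have B: "real (k - 1) * ln 2 < 4 * ln (real n)" by (simp add: ln_realpow)
  have l2: "ln (2::real) \<ge> 1/2"
  proof -
    have "ln (1/2::real) \<le> 1/2 - 1" by (rule ln_le_minus_one) simp
    then show ?thesis by (simp add: ln_div)
  qed
  have "ln (real n) \<ge> ln 4" using n4 by simp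
  moreover have "ln (4::real) = 2 * ln 2"
    using ln_realpow[of 2 2] by simp
  ultimately have ln1: "ln (real n) \<ge> 1" using l2 by linarith
  have "real (k - 1) * (1/2) \<le> real (k - 1) * ln 2" using l2 by (intro mult_left_mono) auto
  then have "real (k - 1) < 8 * ln (real n)" using B by linarith
  moreover have "real k = real (k - 1) + 1" using assms(4) by simp
  ultimately show "real k < 10 * ln (real n)" using ln1 by linarith
qed

end
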